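(* Let $x_1,\dots,x_n\in\mathbb{R}^d$ span $\mathbb{R}^d$, let $h:(0,\infty)\to(0,\infty)$, and define $\mathcal{G}:\mathbb{P}_d\to\mathbb{P}_d$ by $\mathcal{G}(S)=\frac{2}{n}\sum_{i=1}^n x_i\,h(x_i^TS^{-1}x_i)\,x_i^T$. If $h$ is log-nonexpansive, i.e., $|\log h(t)-\log h(s)|\le|\log t-\log s|$ for all $s,t>0$, then $\delta_T(\mathcal{G}(S),\mathcal{G}(R))\le\delta_T(S,R)$ for all $S,R\in\mathbb{P}_d$. If moreover $h$ is log-contractive, i.e., $|\log h(t)-\log h(s)|<|\log t-\log s|$ for all $s\neq t$, then $\delta_T(\mathcal{G}(S),\mathcal{G}(R))<\delta_T(S,R)$ for all $S\neq R$.
   Context: $\mathbb{P}_d$ denotes $d\times d$ real symmetric (Hermitian) positive definite matrices. The Thompson metric is $\delta_T(X,Y):=\|\log(Y^{-1/2}XY^{-1/2})\|$ with $\|\cdot\|$ the operator norm. *)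

theory Defs
  imports "HOL-Analysis.Analysis"
begin

definition posdef :: "real^'d^'d \<Rightarrow> bool" where
  "posdef A \<longleftrightarrow> transpose A = A \<and> (\<forall>x. x \<noteq> 0 \<longrightarrow> x \<bullet> (A *v x) > 0)"

definition diag_mat :: "real^'d \<Rightarrow> real^'d^'d" where
  "diag_mat v = (\<chi> i j. if i = j then v $ i else 0)"

definition mat_fun :: "(real \<Rightarrow> real) \<Rightarrow> real^'d^'d \<Rightarrow> real^'d^'d" where
  "mat_fun f A = (SOME B. \<exists>U lam. orthogonal_matrix U \<and>
      A = U ** diag_mat lam ** transpose U \<and>
      B = U ** diag_mat (\<chi> i. f (lam $ i)) ** transpose U)"

definition op_norm :: "real^'d^'d \<Rightarrow> real" where
  "op_norm M = onorm (\<lambda>v. M *v v)"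

definition thompson :: "real^'d^'d \<Rightarrow> real^'d^'d \<Rightarrow> real" where
  "thompson X Y = (let Yh = mat_fun (\<lambda>t. inverse (sqrt t)) Y
                   in op_norm (mat_fun ln (Yh ** X ** Yh)))"

definition outer :: "real^'d \<Rightarrow> real^'d \<Rightarrow> real^'d^'d" where
  "outer x y = (\<chi> a b. x $ a * y $ b)"

definition Gmap :: "nat \<Rightarrow> (nat \<Rightarrow> real^'d) \<Rightarrow> (real \<Rightarrow> real) \<Rightarrow> real^'d^'d \<Rightarrow> real^'d^'d" where
  "Gmap n x h S = (2 / real n) *\<^sub>R
     (\<Sum>i<n. h (x i \<bullet> (matrix_inv S *v x i)) *\<^sub>R outer (x i) (x i))"

definition log_nonexpansive :: "(real \<Rightarrow> real) \<Rightarrow> bool" where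
  "log_nonexpansive h \<longleftrightarrow>
     (\<forall>s t. s > 0 \<longrightarrow> t > 0 \<longrightarrow> \<bar>ln (h t) - ln (h s)\<bar> \<le> \<bar>ln t - ln s\<bar>)"

definition log_contractive :: "(real \<Rightarrow> real) \<Rightarrow> bool" where
  "log_contractive h \<longleftrightarrow>
     (\<forall>s t. s > 0 \<longrightarrow> t > 0 \<longrightarrow> s \<noteq> t \<longrightarrow> \<bar>ln (h t) - ln (h s)\<bar> < \<bar>ln t - ln s\<bar>)"

end

theory Submission
  imports Defs
begin


lemma quad_zero:
  fixes b q :: real
  assumes "\<And>t. 2*t*b + t^2*q \<le> 0"
  shows "b = 0"
proof (rule ccontr)
  assume nz: "b \<noteq> 0"
  define t where "t = b / (\<bar>q\<bar> + 1)"
  have p: "\<bar>q\<bar> + 1 > 0" by simp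
  have tq: "\<bar>t*q\<bar> \<le> \<bar>b\<bar>"
  proof -
    have "\<bar>t*q\<bar> = \<bar>b\<bar> * (\<bar>q\<bar> / (\<bar>q\<bar>+1))" using p by (simp add: t_def abs_mult)
    also have "\<dots> \<le> \<bar>b\<bar> * 1" using p by (intro mult_left_mono) auto
    finally show ?thesis by simp
  qed
  have "t*(2*b + t*q) > 0"
  proof (cases "b > 0")
    case True
    then have "t > 0" using p by (simp add: t_def)
    moreover have "2*b + t*q > 0" using tq True by linarith
    ultimately show ?thesis by simp
  next
    case False
    then have "b < 0" using nz by simp
    then have "t < 0" using p by (simp add: t_def divide_neg_pos)
    moreover have "2*b + t*q < 0" using tq \<open>b < 0\<close> by linarith
    ultimately show ?thesis by (simp add: mult_neg_neg)
  qed
  moreover have "2*t*b + t^2*q = t*(2*b + t*q)" by (simp add: algebra_simps power2_eq_square)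
  ultimately show False using assms[of t] by linarith
qed

lemma sym_dot:
  fixes A :: "real^'n^'n"
  assumes "transpose A = A"
  shows "(A *v u) \<bullet> w = u \<bullet> (A *v w)"
proof -
  have "(A *v u) \<bullet> w = (u v* A) \<bullet> w"
    by (metis assms transpose_matrix_vector)
  also have "\<dots> = u \<bullet> (A *v w)" by (rule dot_lmul_matrix)
  finally show ?thesis .
qed

lemma max_eigen:
  fixes A :: "real^'n^'n"
  assumes sym: "transpose A = A" and V: "subspace V" and inv: "\<And>u. u \<in> V \<Longrightarrow> A *v u \<in> V"
    and ne: "V \<noteq> {0}"
  shows "\<exists>v l. v \<in> V \<and> norm v = 1 \<and> A *v v = l *\<^sub>R v"
proof -
  obtain u where u: "u \<in> V" "u \<noteq> 0" using ne V subspace_0 by blast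
  let ?K = "V \<inter> sphere 0 1"
  have cK: "compact ?K"
    by (intro closed_Int_compact closed_subspace V compact_sphere)
  have uK: "u /\<^sub>R norm u \<in> ?K" using u V by (auto simp: subspace_scale)
  have cont: "continuous_on ?K (\<lambda>x. x \<bullet> (A *v x))"
    by (intro continuous_intros linear_continuous_on) (simp add: bounded_linear_def)
  obtain v where vK: "v \<in> ?K" and vmax: "\<And>y. y \<in> ?K \<Longrightarrow> y \<bullet> (A *v y) \<le> v \<bullet> (A *v v)"
    using continuous_attains_sup[OF cK _ cont] uK by blast
  define l where "l = v \<bullet> (A *v v)"
  have v1: "v \<bullet> v = 1" using vK by (simp add: dot_square_norm)
  have bound: "w \<bullet> (A *v w) \<le> l * (w \<bullet> w)" if w: "w \<in> V" for w
  proof (cases "w = 0")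
    case True then show ?thesis by simp
  next
    case False
    have "w /\<^sub>R norm w \<in> ?K" using w False V by (auto simp: subspace_scale)
    from vmax[OF this] have "(w \<bullet> (A *v w)) / (norm w)^2 \<le> l"
      by (simp add: l_def matrix_vector_mult_scaleR inner_scaleR_left inner_scaleR_right power2_eq_square field_simps)
    then show ?thesis using False by (simp add: dot_square_norm field_simps)
  qed
  have orth: "w \<bullet> (A *v v - l *\<^sub>R v) = 0" if w: "w \<in> V" for w
  proof -
    have "2*t*(w \<bullet> (A *v v - l *\<^sub>R v)) + t^2*(w \<bullet> (A *v w) - l * (w \<bullet> w)) \<le> 0" for t
    proof -
      have "v + t *\<^sub>R w \<in> V" using vK w V by (auto intro: subspace_add subspace_scale)
      from bound[OF this]
      have "(v + t *\<^sub>R w) \<bullet> (A *v (v + t *\<^sub>R w)) \<le> l * ((v + t *\<^sub>R w) \<bullet> (v + t *\<^sub>R w))" .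
      moreover have "w \<bullet> (A *v v) = v \<bullet> (A *v w)"
        using sym_dot[OF sym, of w v] by (simp add: inner_commute)
      ultimately show ?thesis
        by (simp add: matrix_vector_right_distrib matrix_vector_mult_scaleR inner_add_left inner_add_right
            inner_diff_right inner_commute[of v w] v1 l_def[symmetric] algebra_simps power2_eq_square)
    qed
    then show ?thesis by (rule quad_zero)
  qed
  have "A *v v - l *\<^sub>R v \<in> V" using vK inv V by (auto intro: subspace_diff subspace_scale)
  from orth[OF this] have "A *v v = l *\<^sub>R v" by simp
  then show ?thesis using vK by auto
qed

lemma eigen_basis:
  fixes A :: "real^'n^'n"
  assumes sym: "transpose A = A"
  shows "subspace V \<Longrightarrow> (\<And>u. u \<in> V \<Longrightarrow> A *v u \<in> V) \<Longrightarrow>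
    \<exists>B. B \<subseteq> V \<and> pairwise orthogonal B \<and> (\<forall>b\<in>B. norm b = 1 \<and> (\<exists>l. A *v b = l *\<^sub>R b)) \<and> span B = V"
proof (induction "dim V" arbitrary: V rule: less_induct)
  case less
  show ?case
  proof (cases "V = {0}")
    case True
    then show ?thesis by (intro exI[of _ "{}"]) auto
  next
    case False
    obtain v l where v: "v \<in> V" "norm v = 1" "A *v v = l *\<^sub>R v"
      using max_eigen[OF sym less.prems False] by blast
    define W where "W = {u \<in> V. u \<bullet> v = 0}"
    have sW: "subspace W" using less.prems(1)
      by (auto simp: W_def subspace_def inner_add_left)
    have iW: "A *v u \<in> W" if "u \<in> W" for u
    proof -
      have "(A *v u) \<bullet> v = u \<bullet> (A *v v)" by (rule sym_dot[OF sym])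
      also have "\<dots> = 0" using that v by (simp add: W_def)
      finally show ?thesis using that less.prems(2) by (auto simp: W_def)
    qed
    have WV: "W \<subset> V"
    proof -
      have "v \<notin> W" using v by (auto simp: W_def dot_square_norm)
      moreover have "W \<subseteq> V" by (auto simp: W_def)
      ultimately show ?thesis using v(1) by blast
    qed
    have "dim W < dim V"
    proof -
      have e: "span W = W" "span V = V" using sW less.prems(1) by (simp_all add: span_eq_iff)
      show ?thesis using dim_psubset[of W V] WV unfolding e by blast
    qed
    from less.hyps[OF this sW iW] obtain B where
      B: "B \<subseteq> W" "pairwise orthogonal B" "\<forall>b\<in>B. norm b = 1 \<and> (\<exists>l. A *v b = l *\<^sub>R b)" "span B = W"
      by blast
    have vB: "v \<notin> B" using B(1) v by (auto simp: W_def dot_square_norm)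
    show ?thesis
    proof (intro exI[of _ "insert v B"] conjI)
      show "insert v B \<subseteq> V" using B(1) v by (auto simp: W_def)
      show "pairwise orthogonal (insert v B)"
        using B(1,2) by (auto simp: pairwise_insert W_def orthogonal_def inner_commute)
      show "\<forall>b\<in>insert v B. norm b = 1 \<and> (\<exists>l. A *v b = l *\<^sub>R b)" using B(3) v by auto
      show "span (insert v B) = V"
      proof
        show "span (insert v B) \<subseteq> V"
          using \<open>insert v B \<subseteq> V\<close> less.prems(1) by (simp add: span_minimal)
        show "V \<subseteq> span (insert v B)"
        proof
          fix u assume u: "u \<in> V"
          have "u - (u \<bullet> v) *\<^sub>R v \<in> W"
            using u v less.prems(1) by (auto simp: W_def inner_diff_left dot_square_norm subspace_diff subspace_scale)
          then have "u - (u \<bullet> v) *\<^sub>R v \<in> span (insert v B)"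
            using B(4) span_mono[of B "insert v B"] by auto
          moreover have "(u \<bullet> v) *\<^sub>R v \<in> span (insert v B)"
            by (simp add: span_base span_scale)
          ultimately have "u - (u \<bullet> v) *\<^sub>R v + (u \<bullet> v) *\<^sub>R v \<in> span (insert v B)"
            by (rule span_add)
          then show "u \<in> span (insert v B)" by simp
        qed
      qed
    qed
  qed
qed

definition mm :: "real^'n^'n \<Rightarrow> real^'n \<Rightarrow> real^'n^'n" where
  "mm U a = U ** diag_mat a ** transpose U"

lemma spectral:
  fixes A :: "real^'n^'n"
  assumes sym: "transpose A = A"
  shows "\<exists>U lam. orthogonal_matrix U \<and> A = mm U lam"
proof -
  obtain B where B: "pairwise orthogonal B" "\<forall>b\<in>B. norm b = 1 \<and> (\<exists>l. A *v b = l *\<^sub>R b)" "span B = UNIV"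
    using eigen_basis[OF sym, of UNIV] by auto
  have ind: "independent B"
    using B by (intro pairwise_orthogonal_independent) auto
  have "card B = CARD('n)"
  proof -
    have "card B = dim B" using dim_eq_card_independent[OF ind] by simp
    also have "\<dots> = dim (span B)" by simp
    also have "\<dots> = dim (UNIV :: (real^'n) set)" using B(3) by simp
    also have "\<dots> = CARD('n)" by simp
    finally show ?thesis .
  qed
  then obtain f where f: "bij_betw f (UNIV::'n set) B"
    using finite_same_card_bij[of "UNIV::'n set" B] finiteI_independent[OF ind] by auto
  have fB: "f i \<in> B" for i using f by (auto simp: bij_betw_def)
  have [simp]: "norm (f i) = 1" for i using B(2) fB by blast
  have [simp]: "i \<noteq> j \<Longrightarrow> orthogonal (f i) (f j)" for i j
    using B(1) f by (auto simp: pairwise_def bij_betw_def inj_on_def)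
  define U where "U = (\<chi> i j. f j $ i)"
  have oU: "orthogonal_matrix U"
    by (simp add: U_def orthogonal_matrix_orthonormal_columns column_def)
  define lam where "lam = (\<chi> j. SOME l. A *v f j = l *\<^sub>R f j)"
  have ev: "A *v f j = (lam $ j) *\<^sub>R f j" for j
    unfolding lam_def using B(2) fB[of j] by (auto intro: someI_ex)
  have "A ** U = U ** diag_mat lam"
  proof -
    have "(A ** U) $ i $ j = (U ** diag_mat lam) $ i $ j" for i j
    proof -
      have "(A ** U) $ i $ j = (A *v f j) $ i"
        by (simp add: U_def matrix_matrix_mult_def matrix_vector_mult_def)
      also have "\<dots> = lam $ j * f j $ i" by (simp add: ev)
      also have "\<dots> = (U ** diag_mat lam) $ i $ j"
        by (simp add: U_def matrix_matrix_mult_def diag_mat_def if_distrib cong: if_cong)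
      finally show ?thesis .
    qed
    then show ?thesis by (simp add: vec_eq_iff)
  qed
  then have "A = U ** diag_mat lam ** transpose U"
  proof -
    have "A = A ** (U ** transpose U)" using oU by (simp add: orthogonal_matrix_def)
    also have "\<dots> = (A ** U) ** transpose U" by (simp add: matrix_mul_assoc)
    finally show ?thesis using \<open>A ** U = U ** diag_mat lam\<close> by simp
  qed
  then show ?thesis using oU by (auto simp: mm_def)
qed


lemma if0_mult: "(if P then x else 0) * (y::real) = (if P then x * y else 0)" by simp

lemma diag_mat_mult: "diag_mat a ** diag_mat b = diag_mat (a * b)"
  unfolding vec_eq_iff diag_mat_def matrix_matrix_mult_def
  by (auto simp: if0_mult sum.delta)

lemma diag_mat_vec: "diag_mat a *v z = a * z"
  unfolding vec_eq_iff diag_mat_def matrix_vector_mult_def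
  by (auto simp: if0_mult sum.delta)

lemma diag_mat_one: "diag_mat (\<chi> i. 1) = mat 1"
  by (simp add: vec_eq_iff diag_mat_def mat_def)

lemma transpose_diag_mat: "transpose (diag_mat a) = diag_mat a"
  by (simp add: vec_eq_iff diag_mat_def transpose_def)
lemma mm_mult:
  assumes "orthogonal_matrix U"
  shows "mm U a ** mm U b = mm U (a * b)"
proof -
  have "mm U a ** mm U b = U ** diag_mat a ** (transpose U ** U) ** diag_mat b ** transpose U"
    by (simp add: mm_def matrix_mul_assoc)
  also have "\<dots> = U ** (diag_mat a ** diag_mat b) ** transpose U"
    using assms by (simp add: orthogonal_matrix_def matrix_mul_assoc)
  also have "\<dots> = mm U (a * b)"
    by (simp add: mm_def diag_mat_mult)
  finally show ?thesis .
qed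

lemma mm_transpose: "transpose (mm U a) = mm U a"
  by (simp add: mm_def matrix_transpose_mul transpose_diag_mat matrix_mul_assoc)

lemma mm_one: "orthogonal_matrix U \<Longrightarrow> mm U (\<chi> i. 1) = mat 1"
  by (simp add: mm_def diag_mat_one orthogonal_matrix_def)

lemma mm_vec: "mm U a *v v = U *v (a * (transpose U *v v))"
  by (simp add: mm_def matrix_vector_mul_assoc[symmetric] diag_mat_vec del: transpose_matrix_vector)

lemma orth_norm:
  fixes U :: "real^'n^'n"
  assumes "orthogonal_matrix U"
  shows "norm (U *v z) = norm z"
proof -
  have "(U *v z) \<bullet> (U *v z) = z \<bullet> z"
  proof -
    have "(U *v z) \<bullet> (U *v z) = (transpose U *v (U *v z)) \<bullet> z"
      using dot_lmul_matrix[of "U *v z" U z] by (simp add: inner_commute)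
    also have "\<dots> = z \<bullet> z" using assms
      by (simp add: matrix_vector_mul_assoc orthogonal_matrix_def del: transpose_matrix_vector)
    finally show ?thesis .
  qed
  then show ?thesis by (simp add: dot_square_norm)
qed

lemma inner_mat_move:
  fixes U :: "real^'n^'n"
  shows "v \<bullet> (U *v z) = (transpose U *v v) \<bullet> z"
  using dot_lmul_matrix[of v U z] by simp

lemma mm_quad:
  fixes U :: "real^'n^'n"
  shows "v \<bullet> (mm U a *v v) = (\<Sum>i\<in>UNIV. a$i * ((transpose U *v v)$i)^2)"
proof -
  let ?w = "transpose U *v v"
  have "v \<bullet> (mm U a *v v) = ?w \<bullet> (a * ?w)"
    by (simp only: mm_vec inner_mat_move)
  also have "\<dots> = (\<Sum>i\<in>UNIV. a$i * (?w$i)^2)"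
    by (simp add: inner_vec_def power2_eq_square algebra_simps del: transpose_matrix_vector)
  finally show ?thesis .
qed

lemma orth_col:
  fixes U :: "real^'n^'n"
  assumes "orthogonal_matrix U"
  shows "transpose U *v (U *v axis i 1) = axis i 1" "norm (U *v axis i 1) = 1"
    "mm U a *v (U *v axis i 1) = a$i *\<^sub>R (U *v axis i 1)"
proof -
  show 1: "transpose U *v (U *v axis i 1) = axis i 1" using assms
    by (simp add: matrix_vector_mul_assoc orthogonal_matrix_def del: transpose_matrix_vector)
  show "norm (U *v axis i 1) = 1" using orth_norm[OF assms] by simp
  have "a * axis i 1 = a$i *\<^sub>R axis i 1"
    by (simp add: vec_eq_iff axis_def)
  then show "mm U a *v (U *v axis i 1) = a$i *\<^sub>R (U *v axis i 1)"
    by (simp add: mm_vec 1 matrix_vector_mult_scaleR del: transpose_matrix_vector)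
qed

lemma mm_eig_quad:
  fixes U :: "real^'n^'n"
  assumes "orthogonal_matrix U"
  shows "(U *v axis i 1) \<bullet> (mm U a *v (U *v axis i 1)) = a$i"
  using orth_col(2)[OF assms, of i] orth_col(3)[OF assms, where i=i and a=a] by (simp add: dot_square_norm)

lemma op_norm_mm:
  fixes U :: "real^'n^'n"
  assumes oU: "orthogonal_matrix U"
  shows "op_norm (mm U a) \<le> m \<longleftrightarrow> (\<forall>i. \<bar>a$i\<bar> \<le> m)"
proof
  assume le: "op_norm (mm U a) \<le> m"
  show "\<forall>i. \<bar>a$i\<bar> \<le> m"
  proof
    fix i
    have "norm (mm U a *v (U *v axis i 1)) \<le> onorm (\<lambda>v. mm U a *v v) * norm (U *v axis i 1)"
      by (rule onorm) simp
    then show "\<bar>a$i\<bar> \<le> m" using le orth_col(2)[OF oU, of i] orth_col(3)[OF oU, where i=i and a=a] by (simp add: op_norm_def)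
  qed
next
  assume all: "\<forall>i. \<bar>a$i\<bar> \<le> m"
  show "op_norm (mm U a) \<le> m"
    unfolding op_norm_def
  proof (rule onorm_le)
    fix v :: "real^'n"
    let ?w = "transpose U *v v"
    have "norm (mm U a *v v) = norm (a * ?w)"
      by (simp add: mm_vec orth_norm[OF oU] del: transpose_matrix_vector)
    also have "\<dots> \<le> m * norm ?w"
    proof -
      have m0: "0 \<le> m" using all by (meson abs_ge_zero order_trans)
      have "(norm (a * ?w))^2 = (\<Sum>i\<in>UNIV. (a$i)^2 * (?w$i)^2)"
        by (simp add: norm_vec_def L2_set_def power_mult_distrib sum_nonneg del: transpose_matrix_vector)
      also have "\<dots> \<le> (\<Sum>i\<in>UNIV. m^2 * (?w$i)^2)"
        using all by (intro sum_mono mult_right_mono) (auto simp: abs_le_square_iff[symmetric] m0 intro: power_mono)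
      also have "\<dots> = (m * norm ?w)^2"
        by (simp add: norm_vec_def L2_set_def power_mult_distrib sum_distrib_left sum_nonneg del: transpose_matrix_vector)
      finally show ?thesis using m0 by (meson norm_ge_zero power2_le_imp_le zero_le_mult_iff)
    qed
    also have "\<dots> = m * norm v"
      using orth_norm[of "transpose U" v] oU by simp
    finally show "norm (mm U a *v v) \<le> m * norm v" .
  qed
qed

lemma mat_fun_mm:
  fixes A :: "real^'n^'n"
  assumes "transpose A = A"
  shows "\<exists>U lam. orthogonal_matrix U \<and> A = mm U lam \<and> mat_fun f A = mm U (\<chi> i. f (lam$i))"
proof -
  have "\<exists>B U lam. orthogonal_matrix U \<and> A = U ** diag_mat lam ** transpose U \<and>
      B = U ** diag_mat (\<chi> i. f (lam $ i)) ** transpose U"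
    using spectral[OF assms] by (auto simp: mm_def)
  then have "\<exists>U lam. orthogonal_matrix U \<and> A = U ** diag_mat lam ** transpose U \<and>
      mat_fun f A = U ** diag_mat (\<chi> i. f (lam $ i)) ** transpose U"
    unfolding mat_fun_def by (rule someI_ex)
  then show ?thesis by (auto simp: mm_def)
qed

lemma posdef_eig:
  fixes U :: "real^'n^'n"
  assumes "orthogonal_matrix U" "posdef (mm U lam)"
  shows "lam$i > 0"
proof -
  have "U *v axis i 1 \<noteq> 0" using orth_col(2)[OF assms(1), of i] by auto
  then show ?thesis using assms(2) mm_eig_quad[OF assms(1), of i lam] by (auto simp: posdef_def)
qed



lemma eig_bounds:
  fixes V :: "real^'n^'n"
  assumes oV: "orthogonal_matrix V"
  shows "(\<forall>i. lo \<le> mu$i \<and> mu$i \<le> hi) \<longleftrightarrow>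
    (\<forall>w. lo*(w \<bullet> w) \<le> w \<bullet> (mm V mu *v w) \<and> w \<bullet> (mm V mu *v w) \<le> hi*(w \<bullet> w))"
proof
  assume b: "\<forall>i. lo \<le> mu$i \<and> mu$i \<le> hi"
  show "\<forall>w. lo*(w \<bullet> w) \<le> w \<bullet> (mm V mu *v w) \<and> w \<bullet> (mm V mu *v w) \<le> hi*(w \<bullet> w)"
  proof
    fix w :: "real^'n"
    let ?z = "transpose V *v w"
    have ww: "w \<bullet> w = (\<Sum>i\<in>UNIV. 1 * (?z$i)^2)"
      using mm_quad[of w V "\<chi> i. 1"] mm_one[OF oV] by simp
    have q: "w \<bullet> (mm V mu *v w) = (\<Sum>i\<in>UNIV. mu$i * (?z$i)^2)"
      by (rule mm_quad)
    have "lo*(w \<bullet> w) = (\<Sum>i\<in>UNIV. lo * (?z$i)^2)" by (simp add: ww sum_distrib_left)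
    also have "\<dots> \<le> (\<Sum>i\<in>UNIV. mu$i * (?z$i)^2)"
      using b by (intro sum_mono mult_right_mono) auto
    finally have 1: "lo*(w \<bullet> w) \<le> w \<bullet> (mm V mu *v w)" using q by simp
    have "(\<Sum>i\<in>UNIV. mu$i * (?z$i)^2) \<le> (\<Sum>i\<in>UNIV. hi * (?z$i)^2)"
      using b by (intro sum_mono mult_right_mono) auto
    also have "\<dots> = hi*(w \<bullet> w)" by (simp add: ww sum_distrib_left)
    finally have 2: "w \<bullet> (mm V mu *v w) \<le> hi*(w \<bullet> w)" using q by simp
    show "lo*(w \<bullet> w) \<le> w \<bullet> (mm V mu *v w) \<and> w \<bullet> (mm V mu *v w) \<le> hi*(w \<bullet> w)"
      using 1 2 by simp
  qed
next
  assume b: "\<forall>w. lo*(w \<bullet> w) \<le> w \<bullet> (mm V mu *v w) \<and> w \<bullet> (mm V mu *v w) \<le> hi*(w \<bullet> w)"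
  show "\<forall>i. lo \<le> mu$i \<and> mu$i \<le> hi"
  proof
    fix i
    have "(V *v axis i 1) \<bullet> (V *v axis i 1) = 1"
      using orth_col(2)[OF oV, of i] by (simp add: dot_square_norm)
    then show "lo \<le> mu$i \<and> mu$i \<le> hi"
      using b[rule_format, of "V *v axis i 1"] mm_eig_quad[OF oV, of i mu] by simp
  qed
qed

lemma abs_ln_le_iff:
  fixes m c :: real
  assumes "m > 0"
  shows "\<bar>ln m\<bar> \<le> c \<longleftrightarrow> exp (-c) \<le> m \<and> m \<le> exp c"
proof -
  have "ln m \<le> c \<longleftrightarrow> m \<le> exp c" using ln_le_cancel_iff[of m "exp c"] assms by simp
  moreover have "-c \<le> ln m \<longleftrightarrow> exp (-c) \<le> m" using ln_le_cancel_iff[of "exp (-c)" m] assms by simp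
  ultimately show ?thesis unfolding abs_le_iff by linarith
qed

lemma thompson_le:
  fixes X Y :: "real^'n^'n"
  assumes X: "posdef X" and Y: "posdef Y"
  shows "thompson X Y \<le> c \<longleftrightarrow>
    (\<forall>v. exp (-c) * (v \<bullet> (Y *v v)) \<le> v \<bullet> (X *v v) \<and> v \<bullet> (X *v v) \<le> exp c * (v \<bullet> (Y *v v)))"
proof -
  have tY: "transpose Y = Y" and tX: "transpose X = X" using X Y by (auto simp: posdef_def)
  obtain U lam where oU: "orthogonal_matrix U" and Yeq: "Y = mm U lam"
    and Yh: "mat_fun (\<lambda>t. inverse (sqrt t)) Y = mm U (\<chi> i. inverse (sqrt (lam$i)))"
    using mat_fun_mm[OF tY] by blast
  have lpos: "lam$i > 0" for i using posdef_eig[OF oU] Y Yeq by auto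
  define s where "s = (\<chi> i. inverse (sqrt (lam$i)))"
  define H where "H = mm U s"
  have sls: "s * lam * s = (\<chi> i. 1)"
  proof -
    have "lam$i \<noteq> 0 \<and> \<bar>lam$i\<bar> = lam$i" for i using lpos[of i] by simp
    then show ?thesis by (simp add: vec_eq_iff s_def field_simps real_sqrt_mult[symmetric])
  qed
  have HYH: "H ** Y ** H = mat 1"
    using mm_mult[OF oU] mm_one[OF oU] sls by (simp add: H_def Yeq)
  have tH: "transpose H = H" by (simp add: H_def mm_transpose)
  have Hmove: "w \<bullet> (H *v z) = (H *v w) \<bullet> z" for w z
    using inner_mat_move[of w H z] tH by simp
  have Hinv: "H *v (Y *v (H *v w)) = w" for w
    using HYH by (simp add: matrix_vector_mul_assoc matrix_mul_assoc[symmetric])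
  define M where "M = H ** X ** H"
  have Mq: "w \<bullet> (M *v w) = (H *v w) \<bullet> (X *v (H *v w))" for w
    by (simp add: M_def matrix_vector_mul_assoc[symmetric] Hmove)
  have Iq: "w \<bullet> w = (H *v w) \<bullet> (Y *v (H *v w))" for w
    using Hmove[of w "Y *v (H *v w)"] Hinv[of w] by simp
  have tM: "transpose M = M" by (simp add: M_def matrix_transpose_mul tH tX matrix_mul_assoc)
  have pM: "posdef M"
    unfolding posdef_def
  proof (intro conjI allI impI tM)
    fix w :: "real^'n" assume "w \<noteq> 0"
    then have "H *v w \<noteq> 0" using Hinv[of w] by auto
    then show "w \<bullet> (M *v w) > 0" using X Mq by (simp add: posdef_def)
  qed
  obtain V mu where oV: "orthogonal_matrix V" and Meq: "M = mm V mu"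
    and lnM: "mat_fun ln M = mm V (\<chi> i. ln (mu$i))"
    using mat_fun_mm[OF tM] by blast
  have mpos: "mu$i > 0" for i using posdef_eig[OF oV] pM Meq by auto
  have th: "thompson X Y = op_norm (mm V (\<chi> i. ln (mu$i)))"
    by (simp add: thompson_def Let_def Yh s_def[symmetric] H_def[symmetric] M_def[symmetric] lnM)
  have "thompson X Y \<le> c \<longleftrightarrow> (\<forall>i. exp (-c) \<le> mu$i \<and> mu$i \<le> exp c)"
    using op_norm_mm[OF oV] abs_ln_le_iff mpos by (simp add: th)
  also have "\<dots> \<longleftrightarrow> (\<forall>w. exp (-c) * (w \<bullet> w) \<le> w \<bullet> (M *v w) \<and> w \<bullet> (M *v w) \<le> exp c * (w \<bullet> w))"
    using eig_bounds[OF oV] by (simp add: Meq)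
  also have "\<dots> \<longleftrightarrow> (\<forall>w. exp (-c) * ((H *v w) \<bullet> (Y *v (H *v w))) \<le> (H *v w) \<bullet> (X *v (H *v w)) \<and>
      (H *v w) \<bullet> (X *v (H *v w)) \<le> exp c * ((H *v w) \<bullet> (Y *v (H *v w))))"
    by (simp only: Mq Iq[symmetric])
  also have "\<dots> \<longleftrightarrow> (\<forall>v. exp (-c) * (v \<bullet> (Y *v v)) \<le> v \<bullet> (X *v v) \<and> v \<bullet> (X *v v) \<le> exp c * (v \<bullet> (Y *v v)))"
  proof
    assume a: "\<forall>w. exp (-c) * ((H *v w) \<bullet> (Y *v (H *v w))) \<le> (H *v w) \<bullet> (X *v (H *v w)) \<and>
      (H *v w) \<bullet> (X *v (H *v w)) \<le> exp c * ((H *v w) \<bullet> (Y *v (H *v w)))"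
    show "\<forall>v. exp (-c) * (v \<bullet> (Y *v v)) \<le> v \<bullet> (X *v v) \<and> v \<bullet> (X *v v) \<le> exp c * (v \<bullet> (Y *v v))"
    proof
      fix v
      have "H *v (Y *v (H *v v)) = v" by (rule Hinv)
      then show "exp (-c) * (v \<bullet> (Y *v v)) \<le> v \<bullet> (X *v v) \<and> v \<bullet> (X *v v) \<le> exp c * (v \<bullet> (Y *v v))"
        using a[rule_format, of "Y *v (H *v v)"] by simp
    qed
  qed auto
  finally show ?thesis .
qed



lemma posdef_inv:
  fixes S :: "real^'n^'n"
  assumes S: "posdef S"
  shows "S ** matrix_inv S = mat 1" "matrix_inv S ** S = mat 1" "posdef (matrix_inv S)"
proof -
  have tS: "transpose S = S" using S by (simp add: posdef_def)
  have "inj ((*v) S)"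
  proof (rule injI)
    fix u v assume "S *v u = S *v v"
    then have "S *v (u - v) = 0" by (simp add: matrix_vector_mult_diff_distrib)
    then have "(u - v) \<bullet> (S *v (u - v)) = 0" by simp
    then show "u = v" using S unfolding posdef_def by (metis less_irrefl right_minus_eq)
  qed
  then obtain B where "B ** S = mat 1" using matrix_left_invertible_injective by blast
  then have inv: "invertible S" using invertible_left_inverse by blast
  then have "\<exists>A'. S ** A' = mat 1 \<and> A' ** S = mat 1" by (simp add: invertible_def)
  then have 12: "S ** matrix_inv S = mat 1 \<and> matrix_inv S ** S = mat 1"
    unfolding matrix_inv_def by (rule someI_ex)
  then show "S ** matrix_inv S = mat 1" "matrix_inv S ** S = mat 1" by auto
  let ?T = "matrix_inv S"
  have "transpose ?T = ?T"
  proof -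
    have "transpose ?T = transpose ?T ** (S ** ?T)" using 12 by simp
    also have "\<dots> = transpose (S ** ?T) ** ?T"
      by (simp add: matrix_transpose_mul tS matrix_mul_assoc)
    also have "\<dots> = ?T" using 12 by simp
    finally show ?thesis .
  qed
  moreover have "v \<bullet> (?T *v v) > 0" if "v \<noteq> 0" for v
  proof -
    have "S *v (?T *v v) = v" using 12 by (simp add: matrix_vector_mul_assoc)
    then have nz: "?T *v v \<noteq> 0" using that by auto
    have "v \<bullet> (?T *v v) = (S *v (?T *v v)) \<bullet> (?T *v v)"
      using \<open>S *v (?T *v v) = v\<close> by simp
    also have "\<dots> = (?T *v v) \<bullet> (S *v (?T *v v))" by (simp add: inner_commute)
    also have "\<dots> > 0" using S nz by (simp add: posdef_def)
    finally show ?thesis .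
  qed
  ultimately show "posdef ?T" by (simp add: posdef_def)
qed

lemma var_ineq:
  fixes A :: "real^'n^'n"
  assumes A: "posdef A"
  shows "2*(w \<bullet> v) - w \<bullet> (A *v w) \<le> v \<bullet> (matrix_inv A *v v)"
proof -
  let ?T = "matrix_inv A"
  have tA: "transpose A = A" using A by (simp add: posdef_def)
  have AT: "A *v (?T *v v) = v" using posdef_inv(1)[OF A] by (simp add: matrix_vector_mul_assoc)
  let ?d = "w - ?T *v v"
  have "0 \<le> ?d \<bullet> (A *v ?d)"
    using A unfolding posdef_def by (cases "?d = 0") (auto intro: less_imp_le)
  also have "?d \<bullet> (A *v ?d) = w \<bullet> (A *v w) - 2*(w \<bullet> v) + v \<bullet> (?T *v v)"
  proof -
    have s: "(?T *v v) \<bullet> (A *v w) = w \<bullet> v"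
      using sym_dot[OF tA, of w "?T *v v"] AT by (simp add: inner_commute)
    show ?thesis
      by (simp add: matrix_vector_mult_diff_distrib inner_diff_left inner_diff_right AT s inner_commute[of "?T *v v" v])
  qed
  finally show ?thesis by simp
qed

lemma inv_order:
  fixes A B :: "real^'n^'n"
  assumes A: "posdef A" and B: "posdef B" and k: "k > 0"
    and le: "\<And>v. v \<bullet> (A *v v) \<le> k * (v \<bullet> (B *v v))"
  shows "v \<bullet> (matrix_inv B *v v) \<le> k * (v \<bullet> (matrix_inv A *v v))"
proof -
  let ?q = "v \<bullet> (matrix_inv B *v v)"
  define w where "w = (1/k) *\<^sub>R (matrix_inv B *v v)"
  have BT: "B *v (matrix_inv B *v v) = v" using posdef_inv(1)[OF B] by (simp add: matrix_vector_mul_assoc)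
  have wv: "w \<bullet> v = ?q / k" by (simp add: w_def inner_commute)
  have wBw: "w \<bullet> (B *v w) = ?q / k^2"
    by (simp add: w_def matrix_vector_mult_scaleR BT inner_commute power2_eq_square)
  have "2*(w \<bullet> v) - k * (w \<bullet> (B *v w)) \<le> 2*(w \<bullet> v) - w \<bullet> (A *v w)" using le[of w] by simp
  also have "\<dots> \<le> v \<bullet> (matrix_inv A *v v)" by (rule var_ineq[OF A])
  finally have "2*(?q/k) - k*(?q/k^2) \<le> v \<bullet> (matrix_inv A *v v)" by (simp add: wv wBw)
  moreover have "2*(?q/k) - k*(?q/k^2) = ?q / k" using k by (simp add: field_simps power2_eq_square)
  ultimately have "?q / k \<le> v \<bullet> (matrix_inv A *v v)" by (simp only:)
  then show ?thesis using k by (simp add: pos_divide_le_eq mult.commute)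
qed

lemma quad_eq_imp_eq:
  fixes S R :: "real^'n^'n"
  assumes tS: "transpose S = S" and tR: "transpose R = R"
    and eq: "\<And>v. v \<bullet> (S *v v) = v \<bullet> (R *v v)"
  shows "S = R"
proof -
  have pol: "u \<bullet> (M *v w) = ((u + w) \<bullet> (M *v (u + w)) - u \<bullet> (M *v u) - w \<bullet> (M *v w)) / 2"
    if "transpose M = M" for M :: "real^'n^'n" and u w
  proof -
    have "w \<bullet> (M *v u) = u \<bullet> (M *v w)"
      using sym_dot[OF that, of w u] by (simp add: inner_commute)
    then show ?thesis
      by (simp add: matrix_vector_right_distrib inner_add_left inner_add_right)
  qed
  have uw: "u \<bullet> (S *v w) = u \<bullet> (R *v w)" for u w
    using pol[OF tS, of u w] pol[OF tR, of u w] eq by simp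
  have "S *v w = R *v w" for w
  proof -
    have "(S *v w - R *v w) \<bullet> (S *v w - R *v w) = 0"
      using uw[of "S *v w - R *v w" w] by (simp only: inner_diff_right)
    then show ?thesis by simp
  qed
  then show ?thesis by (simp add: matrix_eq)
qed



lemma ratio_iff:
  fixes a b c :: real
  assumes "a > 0" "b > 0"
  shows "\<bar>ln a - ln b\<bar> \<le> c \<longleftrightarrow> exp (-c) * b \<le> a \<and> a \<le> exp c * b"
proof -
  have "ln a - ln b = ln (a / b)" using assms by (simp add: ln_div)
  moreover have "a / b > 0" using assms by simp
  ultimately have "\<bar>ln a - ln b\<bar> \<le> c \<longleftrightarrow> exp (-c) \<le> a / b \<and> a / b \<le> exp c"
    using abs_ln_le_iff by simp
  also have "\<dots> \<longleftrightarrow> exp (-c) * b \<le> a \<and> a \<le> exp c * b"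
    using assms by (simp add: pos_divide_le_eq pos_le_divide_eq)
  finally show ?thesis .
qed

lemma outer_vec: "outer x x *v v = (x \<bullet> v) *\<^sub>R x"
  by (simp add: vec_eq_iff outer_def matrix_vector_mult_def inner_vec_def sum_distrib_left mult_ac)

lemma sum_mat_vec: "finite I \<Longrightarrow> (\<Sum>i\<in>I. M i) *v v = (\<Sum>i\<in>I. M i *v v)"
  by (induction I rule: finite_induct) (auto simp: matrix_vector_mult_add_rdistrib)

lemma G_quad:
  "v \<bullet> (Gmap n x h S *v v) =
     (2 / real n) * (\<Sum>i<n. h (x i \<bullet> (matrix_inv S *v x i)) * (x i \<bullet> v)^2)"
proof -
  have "Gmap n x h S *v v = (2 / real n) *\<^sub>R
     (\<Sum>i<n. h (x i \<bullet> (matrix_inv S *v x i)) *\<^sub>R ((x i \<bullet> v) *\<^sub>R x i))"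
    by (simp add: Gmap_def scaleR_matrix_vector_assoc[symmetric] sum_mat_vec outer_vec)
  then show ?thesis
    by (simp add: inner_sum_right inner_commute[of v] power2_eq_square mult_ac)
qed

lemma outer_transpose: "transpose (outer y y) = outer y y"
  by (simp add: vec_eq_iff transpose_def outer_def mult.commute)

lemma transpose_sum: "finite I \<Longrightarrow> transpose (\<Sum>i\<in>I. M i) = (\<Sum>i\<in>I. transpose (M i))"
  by (induction I rule: finite_induct) (auto simp: transpose_def vec_eq_iff)

lemma G_transpose: "transpose (Gmap n x h S) = Gmap n x h S"
  unfolding Gmap_def by (simp add: transpose_scalar transpose_sum transpose_scalar outer_transpose)

lemma t_pos:
  fixes S :: "real^'n^'n"
  assumes "posdef S" "y \<noteq> 0"
  shows "y \<bullet> (matrix_inv S *v y) > 0"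
  using posdef_inv(3)[OF assms(1)] assms(2) by (simp add: posdef_def)

lemma span_witness:
  fixes x :: "nat \<Rightarrow> real^'n"
  assumes spans: "span (x ` {..<n}) = UNIV" and v: "v \<noteq> 0"
  shows "\<exists>i<n. x i \<bullet> v \<noteq> 0"
proof (rule ccontr)
  assume "\<not> ?thesis"
  then have "orthogonal v y" if "y \<in> x ` {..<n}" for y
    using that by (auto simp: orthogonal_def inner_commute)
  then have "orthogonal v v" using orthogonal_to_span[of v "x ` {..<n}" v] spans by auto
  then show False using v by (simp add: orthogonal_def)
qed

lemma G_posdef:
  fixes x :: "nat \<Rightarrow> real^'n" and S :: "real^'n^'n"
  assumes spans: "span (x ` {..<n}) = UNIV" and hpos: "\<And>t. t > 0 \<Longrightarrow> h t > 0"
    and S: "posdef S"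
  shows "posdef (Gmap n x h S)"
  unfolding posdef_def
proof (intro conjI allI impI G_transpose)
  fix v :: "real^'n" assume v: "v \<noteq> 0"
  obtain j where j: "j < n" "x j \<bullet> v \<noteq> 0" using span_witness[OF spans v] by blast
  have n: "n > 0" using j by simp
  let ?f = "\<lambda>i. h (x i \<bullet> (matrix_inv S *v x i)) * (x i \<bullet> v)^2"
  have nn: "0 \<le> ?f i" for i
  proof (cases "x i = 0")
    case True then show ?thesis by simp
  next
    case False
    then show ?thesis using hpos[OF t_pos[OF S False]] by simp
  qed
  have "x j \<noteq> 0" using j by auto
  then have "0 < ?f j" using hpos[OF t_pos[OF S \<open>x j \<noteq> 0\<close>]] j by simp
  then have "0 < (\<Sum>i<n. ?f i)" using j nn by (intro sum_pos2[of _ j]) auto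
  then show "v \<bullet> (Gmap n x h S *v v) > 0" using n by (simp add: G_quad)
qed

lemma sandwich:
  fixes x :: "nat \<Rightarrow> real^'n" and S R :: "real^'n^'n"
  assumes spans: "span (x ` {..<n}) = UNIV" and hpos: "\<And>t. t > 0 \<Longrightarrow> h t > 0"
    and S: "posdef S" and R: "posdef R"
    and H: "\<And>i. i < n \<Longrightarrow> x i \<noteq> 0 \<Longrightarrow>
       exp (-c) * h (x i \<bullet> (matrix_inv R *v x i)) \<le> h (x i \<bullet> (matrix_inv S *v x i)) \<and>
       h (x i \<bullet> (matrix_inv S *v x i)) \<le> exp c * h (x i \<bullet> (matrix_inv R *v x i))"
  shows "thompson (Gmap n x h S) (Gmap n x h R) \<le> c"
proof -
  let ?fS = "\<lambda>i. h (x i \<bullet> (matrix_inv S *v x i)) * (x i \<bullet> v)^2"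
  let ?fR = "\<lambda>i. h (x i \<bullet> (matrix_inv R *v x i)) * (x i \<bullet> v)^2"
  have main: "exp (-c) * (v \<bullet> (Gmap n x h R *v v)) \<le> v \<bullet> (Gmap n x h S *v v) \<and>
      v \<bullet> (Gmap n x h S *v v) \<le> exp c * (v \<bullet> (Gmap n x h R *v v))" for v
  proof -
    let ?fS = "\<lambda>i. h (x i \<bullet> (matrix_inv S *v x i)) * (x i \<bullet> v)^2"
    let ?fR = "\<lambda>i. h (x i \<bullet> (matrix_inv R *v x i)) * (x i \<bullet> v)^2"
    have t: "exp (-c) * ?fR i \<le> ?fS i \<and> ?fS i \<le> exp c * ?fR i" if i: "i < n" for i
    proof (cases "x i = 0")
      case True then show ?thesis by simp
    next
      case False
      from H[OF i False] have "exp (-c) * h (x i \<bullet> (matrix_inv R *v x i)) * (x i \<bullet> v)^2 \<le> ?fS i \<and>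
          ?fS i \<le> exp c * h (x i \<bullet> (matrix_inv R *v x i)) * (x i \<bullet> v)^2"
        by (auto intro: mult_right_mono)
      then show ?thesis by (simp add: mult.assoc)
    qed
    have p: "0 \<le> 2 / real n" by simp
    have A: "exp (-c) * (\<Sum>i<n. ?fR i) \<le> (\<Sum>i<n. ?fS i)"
      unfolding sum_distrib_left using t by (intro sum_mono) auto
    have B: "(\<Sum>i<n. ?fS i) \<le> exp c * (\<Sum>i<n. ?fR i)"
      unfolding sum_distrib_left using t by (intro sum_mono) auto
    have A': "(2 / real n) * (exp (-c) * (\<Sum>i<n. ?fR i)) \<le> (2 / real n) * (\<Sum>i<n. ?fS i)"
      by (rule mult_left_mono[OF A p])
    have B': "(2 / real n) * (\<Sum>i<n. ?fS i) \<le> (2 / real n) * (exp c * (\<Sum>i<n. ?fR i))"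
      by (rule mult_left_mono[OF B p])
    have e1: "(2 / real n) * (exp (-c) * (\<Sum>i<n. ?fR i)) = exp (-c) * ((2 / real n) * (\<Sum>i<n. ?fR i))"
      by (simp only: mult.left_commute)
    have e2: "(2 / real n) * (exp c * (\<Sum>i<n. ?fR i)) = exp c * ((2 / real n) * (\<Sum>i<n. ?fR i))"
      by (simp only: mult.left_commute)
    show ?thesis unfolding G_quad using A' B' unfolding e1 e2 by (rule conjI)
  qed
  show ?thesis
    using thompson_le[OF G_posdef[where h=h, OF spans hpos S] G_posdef[where h=h, OF spans hpos R]] main by blast
qed

lemma t_ratio:
  fixes S R :: "real^'n^'n"
  assumes S: "posdef S" and R: "posdef R" and c: "thompson S R \<le> c" and y: "y \<noteq> 0"
  shows "\<bar>ln (y \<bullet> (matrix_inv S *v y)) - ln (y \<bullet> (matrix_inv R *v y))\<bar> \<le> c"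
proof -
  have b: "exp (-c) * (v \<bullet> (R *v v)) \<le> v \<bullet> (S *v v) \<and> v \<bullet> (S *v v) \<le> exp c * (v \<bullet> (R *v v))" for v
    using thompson_le[OF S R] c by blast
  have 1: "y \<bullet> (matrix_inv R *v y) \<le> exp c * (y \<bullet> (matrix_inv S *v y))"
    by (rule inv_order[OF S R exp_gt_zero]) (use b in blast)
  have "v \<bullet> (R *v v) \<le> exp c * (v \<bullet> (S *v v))" for v
  proof -
    have "exp c * (exp (-c) * (v \<bullet> (R *v v))) \<le> exp c * (v \<bullet> (S *v v))"
      using b[of v] by (intro mult_left_mono) auto
    then show ?thesis by (simp add: mult.assoc[symmetric] exp_minus)
  qed
  then have 2: "y \<bullet> (matrix_inv S *v y) \<le> exp c * (y \<bullet> (matrix_inv R *v y))"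
    by (rule inv_order[OF R S exp_gt_zero])
  have "exp (-c) * (y \<bullet> (matrix_inv R *v y)) \<le> y \<bullet> (matrix_inv S *v y)"
  proof -
    have "exp (-c) * (y \<bullet> (matrix_inv R *v y)) \<le> exp (-c) * (exp c * (y \<bullet> (matrix_inv S *v y)))"
      using 1 by (intro mult_left_mono) auto
    then show ?thesis by (simp add: mult.assoc[symmetric] exp_minus)
  qed
  then show ?thesis using ratio_iff[OF t_pos[OF S y] t_pos[OF R y]] 2 by simp
qed



theorem proposition38:
  fixes n :: nat and x :: "nat \<Rightarrow> real^'d" and h :: "real \<Rightarrow> real"
  assumes spans: "span (x ` {..<n}) = UNIV"
    and hpos: "\<And>t. t > 0 \<Longrightarrow> h t > 0"
  shows "(log_nonexpansive h \<longrightarrow>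
            (\<forall>S R. posdef S \<and> posdef R \<longrightarrow>
               thompson (Gmap n x h S) (Gmap n x h R) \<le> thompson S R))
       \<and> (log_contractive h \<longrightarrow>
            (\<forall>S R. posdef S \<and> posdef R \<and> S \<noteq> R \<longrightarrow>
               thompson (Gmap n x h S) (Gmap n x h R) < thompson S R))"
proof (intro conjI impI allI)
  fix S R :: "real^'d^'d"
  assume lne: "log_nonexpansive h" and SR: "posdef S \<and> posdef R"
  then have S: "posdef S" and R: "posdef R" by auto
  show "thompson (Gmap n x h S) (Gmap n x h R) \<le> thompson S R"
  proof (rule sandwich[where h=h, OF spans hpos S R])
    fix i assume i: "i < n" and xi: "x i \<noteq> 0"
    let ?tS = "x i \<bullet> (matrix_inv S *v x i)" and ?tR = "x i \<bullet> (matrix_inv R *v x i)"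
    have pS: "?tS > 0" and pR: "?tR > 0" using t_pos[OF S xi] t_pos[OF R xi] by auto
    have "\<bar>ln ?tS - ln ?tR\<bar> \<le> thompson S R" by (rule t_ratio[OF S R order_refl xi])
    moreover have "\<bar>ln (h ?tS) - ln (h ?tR)\<bar> \<le> \<bar>ln ?tS - ln ?tR\<bar>"
      using lne pS pR unfolding log_nonexpansive_def by blast
    ultimately have "\<bar>ln (h ?tS) - ln (h ?tR)\<bar> \<le> thompson S R" by linarith
    then show "exp (- thompson S R) * h ?tR \<le> h ?tS \<and> h ?tS \<le> exp (thompson S R) * h ?tR"
      using ratio_iff[OF hpos[OF pS] hpos[OF pR]] by blast
  qed
next
  fix S R :: "real^'d^'d"
  assume lc: "log_contractive h" and SR: "posdef S \<and> posdef R \<and> S \<noteq> R"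
  then have S: "posdef S" and R: "posdef R" and ne: "S \<noteq> R" by auto
  define c where "c = thompson S R"
  have cpos: "c > 0"
  proof (rule ccontr)
    assume "\<not> c > 0"
    then have "thompson S R \<le> 0" by (simp add: c_def)
    then have b: "v \<bullet> (R *v v) \<le> v \<bullet> (S *v v) \<and> v \<bullet> (S *v v) \<le> v \<bullet> (R *v v)" for v
      using thompson_le[OF S R, of 0] by simp
    have "S = R"
    proof (rule quad_eq_imp_eq)
      show "transpose S = S" "transpose R = R" using S R by (auto simp: posdef_def)
      show "v \<bullet> (S *v v) = v \<bullet> (R *v v)" for v using b[of v] by linarith
    qed
    then show False using ne by simp
  qed
  let ?tS = "\<lambda>i. x i \<bullet> (matrix_inv S *v x i)" and ?tR = "\<lambda>i. x i \<bullet> (matrix_inv R *v x i)"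
  define D where "D = (\<lambda>i. \<bar>ln (h (?tS i)) - ln (h (?tR i))\<bar>) ` {i. i < n \<and> x i \<noteq> 0}"
  define c' where "c' = Max (insert 0 D)"
  have fin: "finite (insert 0 D)" by (simp add: D_def)
  have Dlt: "d < c" if dD: "d \<in> D" for d
  proof -
    obtain i where i: "i < n" "x i \<noteq> 0" and d: "d = \<bar>ln (h (?tS i)) - ln (h (?tR i))\<bar>"
      using dD unfolding D_def by blast
    have pS: "?tS i > 0" and pR: "?tR i > 0" using t_pos[OF S i(2)] t_pos[OF R i(2)] by auto
    show ?thesis
    proof (cases "?tS i = ?tR i")
      case True then show ?thesis using d cpos by simp
    next
      case False
      then have "d < \<bar>ln (?tS i) - ln (?tR i)\<bar>"
        using lc pS pR d unfolding log_contractive_def by auto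
      also have "\<dots> \<le> c" unfolding c_def by (rule t_ratio[OF S R order_refl i(2)])
      finally show ?thesis .
    qed
  qed
  have "c' < c" unfolding c'_def using fin Dlt cpos by (simp add: Max_less_iff)
  moreover have "thompson (Gmap n x h S) (Gmap n x h R) \<le> c'"
  proof (rule sandwich[where h=h, OF spans hpos S R])
    fix i assume i: "i < n" and xi: "x i \<noteq> 0"
    have pS: "?tS i > 0" and pR: "?tR i > 0" using t_pos[OF S xi] t_pos[OF R xi] by auto
    have "\<bar>ln (h (?tS i)) - ln (h (?tR i))\<bar> \<in> insert 0 D" unfolding D_def by (intro insertI2 imageI) (simp add: i xi)
    then have "\<bar>ln (h (?tS i)) - ln (h (?tR i))\<bar> \<le> c'" unfolding c'_def using fin by simp
    then show "exp (- c') * h (?tR i) \<le> h (?tS i) \<and> h (?tS i) \<le> exp c' * h (?tR i)"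
      using ratio_iff[OF hpos[OF pS] hpos[OF pR]] by blast
  qed
  ultimately show "thompson (Gmap n x h S) (Gmap n x h R) < thompson S R"
    unfolding c_def by linarith
qed


end
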